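(* For all integers $n\ge1$ and $0\le m\le n-1$, $$\sum_{j=0}^{m}\begin{bmatrix} n\\ m-j\end{bmatrix}_q\begin{bmatrix} n-m-1\\ j\end{bmatrix}_q q^{j^2}=\sum_{j=0}^{m}\begin{bmatrix} n-1\\ m-j\end{bmatrix}_q\begin{bmatrix} n-m\\ j\end{bmatrix}_q q^{j^2}.$$
   Context: Here $q$ is an indeterminate and for integers $a\ge0$ and $b$, $\begin{bmatrix} a\\ b\end{bmatrix}_q=\frac{(1-q^a)(1-q^{a-1})\cdots(1-q^{a-b+1})}{(1-q)(1-q^2)\cdots(1-q^b)}$ for $0\le b\le a$ and $0$ otherwise. *)

theory Defs
  imports "HOL-Computational_Algebra.Polynomial"
begin

text \<open>Gaussian (q-)binomial coefficient as a polynomial in the indeterminate q = [:0,1:].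
  For 0 \<le> b \<le> a it is the quotient
  (1-q^a)(1-q^(a-1))...(1-q^(a-b+1)) / ((1-q)(1-q^2)...(1-q^b)),
  an exact polynomial division; otherwise 0.\<close>

definition qvar :: "rat poly" where
  "qvar = [:0, 1:]"

definition qbinom :: "int \<Rightarrow> int \<Rightarrow> rat poly" where
  "qbinom a b =
     (if 0 \<le> b \<and> b \<le> a then
        (\<Prod>i\<in>{0..<nat b}. 1 - qvar ^ (nat a - i)) div (\<Prod>i\<in>{1..nat b}. 1 - qvar ^ i)
      else 0)"

end

theory Submission
  imports Defs
begin

fun qb :: "nat \<Rightarrow> nat \<Rightarrow> rat poly" where
  "qb 0 k = (if k = 0 then 1 else 0)"
| "qb (Suc N) 0 = 1"
| "qb (Suc N) (Suc k) = qb N k + qvar ^ (Suc k) * qb N (Suc k)"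

definition PP :: "nat \<Rightarrow> nat \<Rightarrow> rat poly" where
  "PP N k = (\<Prod>i<k. 1 - qvar ^ (N - i))"

definition DD :: "nat \<Rightarrow> rat poly" where
  "DD k = (\<Prod>i\<in>{1..k}. 1 - qvar ^ i)"

lemma PP_zero: "N < k \<Longrightarrow> PP N k = 0"
  unfolding PP_def by (rule prod_zero) (auto intro!: bexI[of _ N])

lemma PP_Suc: "PP N (Suc k) = PP N k * (1 - qvar ^ (N - k))"
  unfolding PP_def by simp

lemma PP_Suc_Suc: "PP (Suc N) (Suc k) = (1 - qvar ^ Suc N) * PP N k"
  unfolding PP_def prod.lessThan_Suc_shift by simp

lemma DD_Suc: "DD (Suc k) = DD k * (1 - qvar ^ Suc k)"
  unfolding DD_def by (simp add: prod.cl_ivl_Suc mult.commute)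

lemma factor_nz: "(1 - qvar ^ i) \<noteq> 0" if "i \<ge> 1"
proof
  assume "1 - qvar ^ i = 0"
  hence "poly (1 - qvar ^ i) 0 = 0" by simp
  moreover have "poly (1 - qvar ^ i) 0 = (1::rat)" using that by (simp add: qvar_def)
  ultimately show False by simp
qed

lemma factor_nz': "Suc 0 \<le> i \<Longrightarrow> qvar ^ i \<noteq> 1"
  using factor_nz by fastforce

lemma DD_nz: "DD k \<noteq> 0"
  unfolding DD_def by (subst prod_zero_iff) (auto dest: factor_nz')

lemma key: "qb N k * DD k = PP N k"
proof (induction N arbitrary: k)
  case 0
  then show ?case
    by (cases k) (auto simp: DD_def PP_def intro: PP_zero[unfolded PP_def, symmetric])
next
  case (Suc N)
  show ?case
  proof (cases k)
    case 0
    then show ?thesis by (simp add: DD_def PP_def)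
  next
    case (Suc k')
    have IH1: "qb N k' * DD k' = PP N k'" using Suc.IH .
    have IH2: "qb N (Suc k') * DD (Suc k') = PP N (Suc k')" using Suc.IH .
    have "qb (Suc N) (Suc k') * DD (Suc k') =
          (qb N k' * DD k') * (1 - qvar ^ Suc k') + qvar ^ Suc k' * (qb N (Suc k') * DD (Suc k'))"
      by (simp add: DD_Suc algebra_simps)
    also have "\<dots> = PP N k' * (1 - qvar ^ Suc k') + qvar ^ Suc k' * (PP N k' * (1 - qvar ^ (N - k')))"
      using IH1 IH2 PP_Suc by simp
    also have "\<dots> = PP (Suc N) (Suc k')"
    proof (cases "k' \<le> N")
      case True
      have e: "Suc N = Suc k' + (N - k')" using True by simp
      show ?thesis unfolding PP_Suc_Suc by (subst e, unfold power_add) (simp add: algebra_simps)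
    next
      case False
      then show ?thesis using PP_zero[of N k'] unfolding PP_Suc_Suc by simp
    qed
    finally show ?thesis using Suc by simp
  qed
qed

lemma qb_zero: "N < k \<Longrightarrow> qb N k = 0"
  using key[of N k] PP_zero[of N k] DD_nz[of k] by simp

lemma qb_0: "qb N 0 = 1"
  by (cases N) auto

lemma qb_var1: "qb (Suc N) (Suc k) = qvar ^ (N - k) * qb N k + qb N (Suc k)"
proof (cases "k \<le> N")
  case False
  then show ?thesis using qb_zero[of "Suc N" "Suc k"] qb_zero[of N k] qb_zero[of N "Suc k"] by simp
next
  case True
  have "qb (Suc N) (Suc k) * DD (Suc k) = (qvar ^ (N - k) * qb N k + qb N (Suc k)) * DD (Suc k)"
  proof -
    have e: "Suc N = Suc k + (N - k)" using True by simp
    have "(qvar ^ (N - k) * qb N k + qb N (Suc k)) * DD (Suc k)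
        = qvar ^ (N - k) * (qb N k * DD k) * (1 - qvar ^ Suc k) + qb N (Suc k) * DD (Suc k)"
      by (simp add: DD_Suc algebra_simps)
    also have "\<dots> = qvar ^ (N - k) * PP N k * (1 - qvar ^ Suc k) + PP N k * (1 - qvar ^ (N - k))"
      by (simp add: key PP_Suc)
    also have "\<dots> = PP (Suc N) (Suc k)"
      unfolding PP_Suc_Suc by (subst e, unfold power_add) (simp add: algebra_simps)
    finally show ?thesis by (metis key)
  qed
  then show ?thesis using DD_nz[of "Suc k"] by (metis mult_cancel_right)
qed

lemma qbinom_eq: "qbinom a b = (if 0 \<le> b \<and> 0 \<le> a then qb (nat a) (nat b) else 0)"
proof -
  have c: "0 \<le> b \<and> b \<le> a \<Longrightarrow> qbinom a b = qb (nat a) (nat b)"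
  proof -
    assume h: "0 \<le> b \<and> b \<le> a"
    have "qbinom a b = PP (nat a) (nat b) div DD (nat b)"
      using h unfolding qbinom_def PP_def DD_def by (simp add: atLeast0LessThan)
    also have "\<dots> = qb (nat a) (nat b)"
      using DD_nz by (simp flip: key)
    finally show ?thesis .
  qed
  show ?thesis
  proof (cases "0 \<le> b \<and> b \<le> a")
    case True then show ?thesis using c by auto
  next
    case False
    then show ?thesis unfolding qbinom_def using qb_zero[of "nat a" "nat b"] by auto
  qed
qed

lemma pascal1:
  assumes "N \<ge> 1"
  shows "qbinom N k = qbinom (N - 1) k + qvar ^ (nat (N - k)) * qbinom (N - 1) (k - 1)"
proof -
  obtain N' where N: "N = int (Suc N')" using assms
    by (intro that[of "nat N - 1"]) simp
  show ?thesis
  proof (cases "k \<ge> 1")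
    case False
    then show ?thesis by (cases "k = 0") (auto simp: qbinom_eq N qb_0)
  next
    case True
    then obtain k' where k: "k = int (Suc k')"
      by (intro that[of "nat k - 1"]) simp
    have N1: "N - 1 = int N'" using N by simp
    have k1: "k - 1 = int k'" using k by simp
    have e1: "qbinom N k = qb (Suc N') (Suc k')"
      unfolding N k qbinom_eq nat_int by (simp del: qb.simps)
    have e2: "qbinom (N - 1) k = qb N' (Suc k')"
      unfolding N1 k qbinom_eq nat_int by (simp del: qb.simps)
    have e3: "qbinom (N - 1) (k - 1) = qb N' k'"
      unfolding N1 k1 qbinom_eq nat_int by (simp del: qb.simps)
    have e4: "nat (N - k) = N' - k'" using N k by simp
    show ?thesis unfolding e1 e2 e3 e4 qb_var1 by (simp add: algebra_simps)
  qed
qed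

lemma qbinom_neg: "k < 0 \<Longrightarrow> qbinom N k = 0"
  by (simp add: qbinom_eq)

theorem mainTheorem18:
  fixes n m :: int
  assumes "n \<ge> 1" and "0 \<le> m" and "m \<le> n - 1"
  shows "(\<Sum>j\<in>{0..m}. qbinom n (m - j) * qbinom (n - m - 1) j * qvar ^ (nat (j^2)))
       = (\<Sum>j\<in>{0..m}. qbinom (n - 1) (m - j) * qbinom (n - m) j * qvar ^ (nat (j^2)))"
proof -
  define G where "G = qbinom"
  define a where "a = n - m - 1"
  define h where "h i = qvar ^ nat (n - m + i + i^2) * G (n - 1) (m - i - 1) * G a i" for i
  define c where "c j = G (n - 1) (m - j) * G a j * qvar ^ nat (j^2)" for j
  define g where "g j = G (n - 1) (m - j) * qvar ^ nat (n - m - j) * G a (j - 1) * qvar ^ nat (j^2)" for j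
  have L: "G n (m - j) * G a j * qvar ^ nat (j^2) = c j + h j" if "j \<in> {0..m}" for j
  proof -
    have p: "G n (m - j) = G (n - 1) (m - j) + qvar ^ nat (n - m + j) * G (n - 1) (m - j - 1)"
      unfolding G_def using pascal1[OF assms(1), of "m - j"] by (simp add: algebra_simps)
    have e: "nat (n - m + j + j^2) = nat (n - m + j) + nat (j^2)"
    proof -
      have "n - m + j \<ge> 0" "j^2 \<ge> 0" using that assms by auto
      thus ?thesis by (metis nat_add_distrib)
    qed
    show ?thesis unfolding p c_def h_def e power_add by (simp add: algebra_simps)
  qed
  have R: "G (n - 1) (m - j) * G (n - m) j * qvar ^ nat (j^2) = c j + g j" for j
  proof -
    have p: "G (n - m) j = G a j + qvar ^ nat (n - m - j) * G a (j - 1)"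
      unfolding G_def a_def using pascal1[of "n - m" j] assms by simp
    show ?thesis unfolding p c_def g_def by (simp add: algebra_simps)
  qed
  have gh: "g j = h (j - 1)" if "j \<in> {1..m}" for j
  proof (cases "j - 1 \<le> a")
    case False
    hence "G a (j - 1) = 0" using qb_zero[of "nat a" "nat (j - 1)"] by (simp add: G_def qbinom_eq)
    then show ?thesis by (simp add: g_def h_def)
  next
    case True
    have e: "nat (n - m + (j - 1) + (j - 1)^2) = nat (n - m - j) + nat (j^2)"
    proof -
      have "n - m + (j - 1) + (j - 1)^2 = (n - m - j) + j^2" by (simp add: power2_eq_square algebra_simps)
      moreover have "n - m - j \<ge> 0" using True a_def by simp
      moreover have "j^2 \<ge> 0" by simp
      ultimately show ?thesis by (metis nat_add_distrib)
    qed
    have m: "m - (j - 1) - 1 = m - j" by simp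
    show ?thesis unfolding g_def h_def e m power_add by (simp add: algebra_simps)
  qed
  have g0: "g 0 = 0" by (simp add: g_def G_def qbinom_neg)
  have hm: "h m = 0" by (simp add: h_def G_def qbinom_neg)
  have s1: "{0..m} = insert m {0..m-1}" using assms by auto
  have s2: "{0..m} = insert 0 {1..m}" using assms by auto
  have s3: "{1..m} = (\<lambda>i. i + 1) ` {0..m-1}" by (auto simp: image_iff intro!: bexI[of _ "x - 1" for x])
  have "(\<Sum>j\<in>{0..m}. g j) = (\<Sum>j\<in>{1..m}. g j)"
    unfolding s2 using g0 by simp
  also have "\<dots> = (\<Sum>j\<in>{1..m}. h (j - 1))" using gh by (rule sum.cong[OF refl])
  also have "\<dots> = (\<Sum>i\<in>{0..m-1}. h i)" unfolding s3 by (subst sum.reindex) (auto simp: inj_on_def)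
  also have "\<dots> = (\<Sum>j\<in>{0..m}. h j)" unfolding s1 using hm by simp
  finally have gsum: "(\<Sum>j\<in>{0..m}. g j) = (\<Sum>j\<in>{0..m}. h j)" .
  have "(\<Sum>j\<in>{0..m}. G n (m - j) * G a j * qvar ^ nat (j^2)) = (\<Sum>j\<in>{0..m}. c j + h j)"
    using L by (rule sum.cong[OF refl])
  also have "\<dots> = (\<Sum>j\<in>{0..m}. c j + g j)" by (simp add: sum.distrib gsum)
  also have "\<dots> = (\<Sum>j\<in>{0..m}. G (n - 1) (m - j) * G (n - m) j * qvar ^ nat (j^2))"
    using R by simp
  finally show ?thesis unfolding G_def a_def .
qed

end
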